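(* Let $A$ be a quasi-quantale such that $(\bigvee X)a=\bigvee\{xa\mid x\in X\}$ for every subset $X\subseteq A$ and every $a\in A$. Then for each multiplicative nucleus $d$ on $A$, the set of fixed points $A_d=\{a\in A\mid d(a)=a\}$ (with the order of $A$, joins $d(\bigvee X)$ and meets as in $A$) is a frame.
   Context: A quasi-quantale is a complete lattice $A$ equipped with an associative binary operation $(a,b)\mapsto ab$ such that for every directed subset $X\subseteq A$ (non-empty, and any two elements of $X$ have an upper bound in $X$) and every $a\in A$: $(\bigvee X)a=\bigvee\{xa\mid x\in X\}$ and $a(\bigvee X)=\bigvee\{ax\mid x\in X\}$. An inflator on $A$ is a monotone map $d\colon A\to A$ with $a\leq d(a)$ for all $a$. A multiplicative nucleus is an inflator $d$ with $d\circ d=d$, $d(a\wedge b)=d(a)\wedge d(b)$ and $d(ab)=d(a)\wedge d(b)$ for all $a,b\in A$. A frame is a complete lattice satisfying $a\wedge\bigvee X=\bigvee\{a\wedge x\mid x\in X\}$ for all $a$ and all subsets $X$. *)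

theory Defs
  imports Main
begin

definition directed_set :: "'a::order set \<Rightarrow> bool" where
  "directed_set X \<longleftrightarrow> X \<noteq> {} \<and> (\<forall>x\<in>X. \<forall>y\<in>X. \<exists>z\<in>X. x \<le> z \<and> y \<le> z)"

definition quasi_quantale :: "('a::complete_lattice \<Rightarrow> 'a \<Rightarrow> 'a) \<Rightarrow> bool" where
  "quasi_quantale m \<longleftrightarrow>
     (\<forall>a b c. m (m a b) c = m a (m b c)) \<and>
     (\<forall>X a. directed_set X \<longrightarrow>
        m (Sup X) a = Sup ((\<lambda>x. m x a) ` X) \<and> m a (Sup X) = Sup ((\<lambda>x. m a x) ` X))"

definition inflator :: "('a::complete_lattice \<Rightarrow> 'a) \<Rightarrow> bool" where
  "inflator d \<longleftrightarrow> mono d \<and> (\<forall>a. a \<le> d a)"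

definition multiplicative_nucleus ::
  "('a::complete_lattice \<Rightarrow> 'a \<Rightarrow> 'a) \<Rightarrow> ('a \<Rightarrow> 'a) \<Rightarrow> bool" where
  "multiplicative_nucleus m d \<longleftrightarrow> inflator d \<and> d \<circ> d = d \<and>
     (\<forall>a b. d (inf a b) = inf (d a) (d b)) \<and> (\<forall>a b. d (m a b) = inf (d a) (d b))"

definition is_lub_in :: "'a::order set \<Rightarrow> 'a set \<Rightarrow> 'a \<Rightarrow> bool" where
  "is_lub_in S X u \<longleftrightarrow> u \<in> S \<and> (\<forall>x\<in>X. x \<le> u) \<and> (\<forall>v\<in>S. (\<forall>x\<in>X. x \<le> v) \<longrightarrow> u \<le> v)"

definition is_glb_in :: "'a::order set \<Rightarrow> 'a set \<Rightarrow> 'a \<Rightarrow> bool" where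
  "is_glb_in S X l \<longleftrightarrow> l \<in> S \<and> (\<forall>x\<in>X. l \<le> x) \<and> (\<forall>v\<in>S. (\<forall>x\<in>X. v \<le> x) \<longrightarrow> v \<le> l)"

definition join_in :: "'a::order set \<Rightarrow> 'a set \<Rightarrow> 'a" where
  "join_in S X = (THE u. is_lub_in S X u)"

definition meet_in :: "'a::order set \<Rightarrow> 'a \<Rightarrow> 'a \<Rightarrow> 'a" where
  "meet_in S a b = (THE l. is_glb_in S {a, b} l)"

definition frame_on :: "'a::order set \<Rightarrow> bool" where
  "frame_on S \<longleftrightarrow>
     (\<forall>X\<subseteq>S. \<exists>u. is_lub_in S X u) \<and> (\<forall>X\<subseteq>S. \<exists>l. is_glb_in S X l) \<and>
     (\<forall>a\<in>S. \<forall>X\<subseteq>S. meet_in S a (join_in S X) = join_in S ((\<lambda>x. meet_in S a x) ` X))"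

end

theory Submission
  imports Defs
begin

lemma lub_unique: "is_lub_in S X u \<Longrightarrow> is_lub_in S X v \<Longrightarrow> u = (v::'a::order)"
  unfolding is_lub_in_def by (meson order_antisym)

lemma glb_unique: "is_glb_in S X u \<Longrightarrow> is_glb_in S X v \<Longrightarrow> u = (v::'a::order)"
  unfolding is_glb_in_def by (meson order_antisym)

theorem corollary3p11:
  fixes m :: "'a::complete_lattice \<Rightarrow> 'a \<Rightarrow> 'a" and d :: "'a \<Rightarrow> 'a"
  assumes "quasi_quantale m"
    and "\<forall>X a. m (Sup X) a = Sup ((\<lambda>x. m x a) ` X)"
    and "multiplicative_nucleus m d"
  shows "frame_on {a. d a = a}
     \<and> (\<forall>X\<subseteq>{a. d a = a}. is_lub_in {a. d a = a} X (d (Sup X)))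
     \<and> (\<forall>X\<subseteq>{a. d a = a}. is_glb_in {a. d a = a} X (Inf X))"
proof -
  define S where "S = {a. d a = a}"
  have mono: "mono d" and infl: "\<And>a. a \<le> d a" and idem: "\<And>a. d (d a) = d a"
    and dinf: "\<And>a b. d (inf a b) = inf (d a) (d b)" and dm: "\<And>a b. d (m a b) = inf (d a) (d b)"
    using assms(3) unfolding multiplicative_nucleus_def inflator_def
    by (auto simp: fun_eq_iff)
  have lub: "is_lub_in S X (d (Sup X))" if "X \<subseteq> S" for X
    unfolding is_lub_in_def S_def
  proof (intro conjI ballI impI)
    show "d (Sup X) \<in> {a. d a = a}" using idem by simp
    fix x assume "x \<in> X" thus "x \<le> d (Sup X)" by (meson Sup_upper infl order_trans)
  next
    fix v assume v: "v \<in> {a. d a = a}" "\<forall>x\<in>X. x \<le> v"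
    then have "Sup X \<le> v" by (simp add: Sup_least)
    then have "d (Sup X) \<le> d v" using mono by (simp add: monoD)
    thus "d (Sup X) \<le> v" using v by simp
  qed
  have glb: "is_glb_in S X (Inf X)" if "X \<subseteq> S" for X
    unfolding is_glb_in_def
  proof (intro conjI ballI impI)
    have "d (Inf X) \<le> x" if "x \<in> X" for x
    proof -
      have "d (Inf X) \<le> d x" using mono that by (simp add: Inf_lower monoD)
      thus ?thesis using \<open>X \<subseteq> S\<close> that by (auto simp: S_def)
    qed
    hence "d (Inf X) \<le> Inf X" by (simp add: Inf_greatest)
    thus "Inf X \<in> S" using infl[of "Inf X"] by (simp add: S_def antisym)
  qed (auto intro: Inf_lower Inf_greatest)
  have joinS: "join_in S X = d (Sup X)" if "X \<subseteq> S" for X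
    unfolding join_in_def using lub[OF that] lub_unique by blast
  have meetS: "meet_in S a b = inf a b" if "a \<in> S" "b \<in> S" for a b
  proof -
    have "{a, b} \<subseteq> S" using that by simp
    hence "is_glb_in S {a, b} (Inf {a, b})" by (rule glb)
    hence "is_glb_in S {a, b} (inf a b)" by simp
    thus ?thesis unfolding meet_in_def using glb_unique by blast
  qed
  have dist: "meet_in S a (join_in S X) = join_in S ((\<lambda>x. meet_in S a x) ` X)"
    if a: "a \<in> S" and X: "X \<subseteq> S" for a X
  proof -
    have da: "d a = a" using a by (simp add: S_def)
    have fx: "x \<in> S" if "x \<in> X" for x using X that by auto
    have img: "(\<lambda>x. meet_in S a x) ` X = (\<lambda>x. inf a x) ` X"
      using meetS[OF a] fx by (auto simp: image_iff)
    have imgS: "(\<lambda>x. inf a x) ` X \<subseteq> S"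
      using fx da by (auto simp: S_def dinf)
    have dS: "d (Sup X) \<in> S" by (simp add: S_def idem)
    have lhs: "meet_in S a (join_in S X) = inf a (d (Sup X))"
      using joinS[OF X] meetS[OF a dS] by simp
    have rhs: "join_in S ((\<lambda>x. meet_in S a x) ` X) = d (Sup ((\<lambda>x. inf a x) ` X))"
      using img joinS[OF imgS] by simp
    have le1: "inf a (d (Sup X)) \<le> d (Sup ((\<lambda>x. inf a x) ` X))"
    proof -
      have "d (m (Sup X) a) = inf (d (Sup X)) a" using dm da by simp
      moreover have "m (Sup X) a = Sup ((\<lambda>x. m x a) ` X)" using assms(2) by blast
      moreover have "Sup ((\<lambda>x. m x a) ` X) \<le> Sup ((\<lambda>x. inf a x) ` X)"
      proof (rule Sup_least, clarify)
        fix x assume "x \<in> X"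
        have "m x a \<le> d (m x a)" by (rule infl)
        also have "\<dots> = inf x a" using dm da fx[OF \<open>x \<in> X\<close>] by (simp add: S_def)
        also have "\<dots> \<le> Sup ((\<lambda>x. inf a x) ` X)" using \<open>x \<in> X\<close>
          by (metis SUP_upper inf_commute)
        finally show "m x a \<le> Sup ((\<lambda>x. inf a x) ` X)" .
      qed
      ultimately show ?thesis using mono by (metis inf_commute monoD)
    qed
    have le2: "d (Sup ((\<lambda>x. inf a x) ` X)) \<le> inf a (d (Sup X))"
    proof -
      have "Sup ((\<lambda>x. inf a x) ` X) \<le> inf a (d (Sup X))"
      proof (rule Sup_least, clarify)
        fix x assume "x \<in> X"
        have "x \<le> d (Sup X)" by (meson Sup_upper infl order_trans \<open>x \<in> X\<close>)
        thus "inf a x \<le> inf a (d (Sup X))" by (simp add: inf.coboundedI2)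
      qed
      hence "d (Sup ((\<lambda>x. inf a x) ` X)) \<le> d (inf a (d (Sup X)))" using mono by (simp add: monoD)
      also have "\<dots> = inf a (d (Sup X))" using dinf da idem by simp
      finally show ?thesis .
    qed
    show ?thesis using lhs rhs le1 le2 by (simp add: antisym)
  qed
  have "frame_on S" unfolding frame_on_def using lub glb dist by blast
  thus ?thesis using lub glb by (simp add: S_def)
qed

end
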